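(* For every set of formulas $\Gamma$ and formula $\phi$: if $\Gamma\models_{\mathbf{VC}}\phi$ then $\Gamma\vdash_{\mathbf{VC}}\phi$.
   Context: Formulas: built from propositional variables and the constant $\bot$ using $\lnot$, the binary connectives $\supset,\land,\lor$, and two binary conditional operators $[\phi]\psi$ and $\langle\phi\rangle\psi$ (treated as primitive by tableau rules). $\top$ abbreviates $\lnot\bot$. Segerberg model: $M=\langle U,P,R,V\rangle$ with $U\neq\emptyset$, $P\subseteq\wp(U)$, $R:P\to\wp(U\times U)$, $V:\mathrm{Var}\to P$, such that $\emptyset,U\in P$; $P$ is closed under complement, binary intersection and union; and for $S,T\in P$, $\{x\in U\mid R_S(x)\subseteq T\}\in P$, where $R_S=R(S)$ and $R_S(x)=\{y\mid (x,y)\in R_S\}$. Truth: $M,x\not\models\bot$; $M,x\models p$ iff $x\in V(p)$; Boolean connectives as usual; $M,x\models[\phi]\psi$ iff $M,y\models\psi$ for all $y\in R_\phi(x)$; $M,x\models\langle\phi\rangle\psi$ iff $M,y\models\psi$ for some $y\in R_\phi(x)$; here $\|\phi\|=\{x\mid M,x\models\phi\}$ and $R_\phi=R_{\|\phi\|}$. A $\mathbf{VC}$-model is a Segerberg model such that for all $S,T\in P$ and $x\in U$: (1) $R_S(x)\subseteq S$; (2) $R_S(x)\cap T\neq\emptyset\Rightarrow R_T(x)\neq\emptyset$; (3) $R_U(x)\subseteq\{x\}$; (4) $x\in R_U(x)$; (5) $R_S(x)\cap T\subseteq R_{S\cap T}(x)$; (6) $R_S(x)\cap T\neq\emptyset\Rightarrow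 R_{S\cap T}(x)\subseteq R_S(x)\cap T$. $\Gamma\models_{\mathbf{VC}}\phi$ iff for every $\mathbf{VC}$-model $M$ and world $x$ with $M,x\models\psi$ for all $\psi\in\Gamma$, $M,x\models\phi$. Tableaux: indices are positive integers. Prefixed formulas are $i:\phi$ and $i\,r_\phi\,j$. For a set $\Gamma$ of formulas and a formula $\phi$, a tableau for $(\Gamma,\phi)$ is a finite downward-branching tree labelled by prefixed formulas, each either an assumption ($1:\psi$ with $\psi\in\Gamma$, or $1:\lnot\phi$) or obtained by applying a branch extension rule to prefixed formulas on its branch; non-branching rules append their conclusions, branching rules split the branch into one child per alternative, each alternative appending its listed conclusions. A branch is closed if it contains $i:\chi$ and $i:\lnot\chi$, or $i:\bot$; a tableau is closed if all branches are closed. $\Gamma\vdash_{\mathbf{VC}}\phi$ means there is a closed $\mathbf{VC}$-tableau for $(\Gamma,\phi)$. Basic rules: from $i:\phi\land\psi$ add $i:\phi,i:\psi$; from $i:\lnot(\phi\land\psi)$ branch $i:\lnot\phi\mid i:\lnot\psi$; from $i:\phi\lor\psi$ branch $i:\phi\mid i:\psi$; from $i:\lnot(\phi\lor\psi)$ add $i:\lnot\phi,i:\lnot\psi$; from $i:\phi\supset\psi$ branch $i:\lnot\phi\mid i:\psi$; from $i:\lnot(\phi\supset\psi)$ add $i:\phi,i:\lnot\psi$; from $i:\lnot\lnot\phi$ add $i:\phi$; ($\Box$) from $i:[\phi]\psi$ and $i\,r_\phi\,j$ add $j:\psi$; ($\lnot\Box$) from $i:\lnot[\phi]\psi$ add $i\,r_\phi\,j$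 and $j:\lnot\psi$, $j$ new; ($\Diamond$) from $i:\langle\phi\rangle\psi$ add $i\,r_\phi\,j$ and $j:\psi$, $j$ new; ($\lnot\Diamond$) from $i:\lnot\langle\phi\rangle\psi$ and $i\,r_\phi\,j$ add $j:\lnot\psi$. (cut) for any index $i$ already on the branch and any $\phi$, branch $i:\phi\mid i:\lnot\phi$. (ea) from $i\,r_\phi\,j$ and any $\psi$, branch ($k:\lnot\phi$, $k:\psi$) $\mid$ ($k:\phi$, $k:\lnot\psi$) $\mid$ $i\,r_\psi\,j$, $k$ new. (R1) from $i\,r_\phi\,j$ add $j:\phi$. (R2) from $j:\psi$ and $i\,r_\phi\,j$ add $i\,r_\psi\,k$, $k$ new. (R3) from $i:\phi$, $j:\lnot\phi$, $i\,r_\top\,j$ add $j:\phi$. (R4) for any index $i$ on the branch add $i\,r_\top\,i$. (R5) from $j:\psi$ and $i\,r_\phi\,j$ add $i\,r_{\phi\land\psi}\,j$. (R6) from $j:\psi$, $i\,r_\phi\,j$, $i\,r_{\phi\land\psi}\,k$ add $k:\psi$ and $i\,r_\phi\,k$. $\mathbf{VC}$-tableaux use all of these rules. *)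

theory Defs
  imports Main
begin

text \<open>Propositional variables are indexed by natural numbers.
  Box a b stands for [a]b, Dia a b for <a>b.\<close>

datatype fm = Var nat | Bot | Neg fm | Imp fm fm | Conj fm fm | Disj fm fm
  | Box fm fm | Dia fm fm

definition Top :: fm where "Top = Neg Bot"

record 'w model =
  dom :: "'w set"
  props :: "'w set set"
  rel :: "'w set \<Rightarrow> ('w \<times> 'w) set"
  val :: "nat \<Rightarrow> 'w set"

definition rs :: "'w model \<Rightarrow> 'w set \<Rightarrow> 'w \<Rightarrow> 'w set" where
  "rs M S x = {y. (x, y) \<in> rel M S}"

definition segerberg_model :: "'w model \<Rightarrow> bool" where
  "segerberg_model M \<longleftrightarrow>
     dom M \<noteq> {} \<and>
     (\<forall>S\<in>props M. S \<subseteq> dom M) \<and>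
     (\<forall>S\<in>props M. rel M S \<subseteq> dom M \<times> dom M) \<and>
     (\<forall>p. val M p \<in> props M) \<and>
     {} \<in> props M \<and> dom M \<in> props M \<and>
     (\<forall>S\<in>props M. dom M - S \<in> props M) \<and>
     (\<forall>S\<in>props M. \<forall>T\<in>props M. S \<inter> T \<in> props M \<and> S \<union> T \<in> props M) \<and>
     (\<forall>S\<in>props M. \<forall>T\<in>props M. {x \<in> dom M. rs M S x \<subseteq> T} \<in> props M)"

definition VC_model :: "'w model \<Rightarrow> bool" where
  "VC_model M \<longleftrightarrow> segerberg_model M \<and>
     (\<forall>S\<in>props M. \<forall>T\<in>props M. \<forall>x\<in>dom M.
        rs M S x \<subseteq> S \<and>
        (rs M S x \<inter> T \<noteq> {} \<longrightarrow> rs M T x \<noteq> {}) \<and>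
        rs M (dom M) x \<subseteq> {x} \<and>
        x \<in> rs M (dom M) x \<and>
        rs M S x \<inter> T \<subseteq> rs M (S \<inter> T) x \<and>
        (rs M S x \<inter> T \<noteq> {} \<longrightarrow> rs M (S \<inter> T) x \<subseteq> rs M S x \<inter> T))"

primrec sat :: "'w model \<Rightarrow> fm \<Rightarrow> 'w \<Rightarrow> bool" where
  "sat M (Var p) x = (x \<in> val M p)"
| "sat M Bot x = False"
| "sat M (Neg a) x = (\<not> sat M a x)"
| "sat M (Imp a b) x = (sat M a x \<longrightarrow> sat M b x)"
| "sat M (Conj a b) x = (sat M a x \<and> sat M b x)"
| "sat M (Disj a b) x = (sat M a x \<or> sat M b x)"
| "sat M (Box a b) x = (\<forall>y. (x, y) \<in> rel M {z \<in> dom M. sat M a z} \<longrightarrow> sat M b y)"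
| "sat M (Dia a b) x = (\<exists>y. (x, y) \<in> rel M {z \<in> dom M. sat M a z} \<and> sat M b y)"

definition VC_conseq :: "fm set \<Rightarrow> fm \<Rightarrow> bool" where
  "VC_conseq \<Gamma> \<phi> \<longleftrightarrow>
     (\<forall>(M :: nat model) x. VC_model M \<longrightarrow> x \<in> dom M \<longrightarrow>
        (\<forall>\<psi>\<in>\<Gamma>. sat M \<psi> x) \<longrightarrow> sat M \<phi> x)"

text \<open>Prefixed formulas: PF i a is i:a, PR i a j is i r_a j.\<close>

datatype pf = PF nat fm | PR nat fm nat

primrec idx_of :: "pf \<Rightarrow> nat set" where
  "idx_of (PF i a) = {i}"
| "idx_of (PR i a j) = {i, j}"

definition idx :: "pf set \<Rightarrow> nat set" where
  "idx B = (\<Union>p\<in>B. idx_of p)"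

definition fresh :: "nat \<Rightarrow> pf set \<Rightarrow> bool" where
  "fresh j B \<longleftrightarrow> 0 < j \<and> j \<notin> idx B"

definition branch_closed :: "pf set \<Rightarrow> bool" where
  "branch_closed B \<longleftrightarrow>
     (\<exists>i \<chi>. PF i \<chi> \<in> B \<and> PF i (Neg \<chi>) \<in> B) \<or> (\<exists>i. PF i Bot \<in> B)"

text \<open>A rule application to a branch B yields a list of alternatives,
  each being a list of prefixed formulas appended to the branch.\<close>

inductive vc_rule :: "pf set \<Rightarrow> pf list list \<Rightarrow> bool" where
  r_and: "PF i (Conj a b) \<in> B \<Longrightarrow> vc_rule B [[PF i a, PF i b]]"
| r_nand: "PF i (Neg (Conj a b)) \<in> B \<Longrightarrow> vc_rule B [[PF i (Neg a)], [PF i (Neg b)]]"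
| r_or: "PF i (Disj a b) \<in> B \<Longrightarrow> vc_rule B [[PF i a], [PF i b]]"
| r_nor: "PF i (Neg (Disj a b)) \<in> B \<Longrightarrow> vc_rule B [[PF i (Neg a), PF i (Neg b)]]"
| r_imp: "PF i (Imp a b) \<in> B \<Longrightarrow> vc_rule B [[PF i (Neg a)], [PF i b]]"
| r_nimp: "PF i (Neg (Imp a b)) \<in> B \<Longrightarrow> vc_rule B [[PF i a, PF i (Neg b)]]"
| r_nneg: "PF i (Neg (Neg a)) \<in> B \<Longrightarrow> vc_rule B [[PF i a]]"
| r_box: "PF i (Box a b) \<in> B \<Longrightarrow> PR i a j \<in> B \<Longrightarrow> vc_rule B [[PF j b]]"
| r_nbox: "PF i (Neg (Box a b)) \<in> B \<Longrightarrow> fresh j B \<Longrightarrow>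
           vc_rule B [[PR i a j, PF j (Neg b)]]"
| r_dia: "PF i (Dia a b) \<in> B \<Longrightarrow> fresh j B \<Longrightarrow> vc_rule B [[PR i a j, PF j b]]"
| r_ndia: "PF i (Neg (Dia a b)) \<in> B \<Longrightarrow> PR i a j \<in> B \<Longrightarrow> vc_rule B [[PF j (Neg b)]]"
| r_cut: "i \<in> idx B \<Longrightarrow> vc_rule B [[PF i a], [PF i (Neg a)]]"
| r_ea: "PR i a j \<in> B \<Longrightarrow> fresh k B \<Longrightarrow>
         vc_rule B [[PF k (Neg a), PF k b], [PF k a, PF k (Neg b)], [PR i b j]]"
| r_R1: "PR i a j \<in> B \<Longrightarrow> vc_rule B [[PF j a]]"
| r_R2: "PF j b \<in> B \<Longrightarrow> PR i a j \<in> B \<Longrightarrow> fresh k B \<Longrightarrow> vc_rule B [[PR i b k]]"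
| r_R3: "PF i a \<in> B \<Longrightarrow> PF j (Neg a) \<in> B \<Longrightarrow> PR i Top j \<in> B \<Longrightarrow> vc_rule B [[PF j a]]"
| r_R4: "i \<in> idx B \<Longrightarrow> vc_rule B [[PR i Top i]]"
| r_R5: "PF j b \<in> B \<Longrightarrow> PR i a j \<in> B \<Longrightarrow> vc_rule B [[PR i (Conj a b) j]]"
| r_R6: "PF j b \<in> B \<Longrightarrow> PR i a j \<in> B \<Longrightarrow> PR i (Conj a b) k \<in> B \<Longrightarrow>
         vc_rule B [[PF k b, PR i a k]]"

text \<open>closes G phi B: every branch of some finite tableau for (G, phi) extending
  the branch with label set B can be closed.\<close>

inductive closes :: "fm set \<Rightarrow> fm \<Rightarrow> pf set \<Rightarrow> bool" for \<Gamma> \<phi> where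
  cl_closed: "branch_closed B \<Longrightarrow> closes \<Gamma> \<phi> B"
| cl_hyp: "\<psi> \<in> \<Gamma> \<Longrightarrow> closes \<Gamma> \<phi> (insert (PF 1 \<psi>) B) \<Longrightarrow> closes \<Gamma> \<phi> B"
| cl_neg: "closes \<Gamma> \<phi> (insert (PF 1 (Neg \<phi>)) B) \<Longrightarrow> closes \<Gamma> \<phi> B"
| cl_rule: "vc_rule B alts \<Longrightarrow> (\<forall>alt\<in>set alts. closes \<Gamma> \<phi> (B \<union> set alt)) \<Longrightarrow>
            closes \<Gamma> \<phi> B"

definition VC_derivable :: "fm set \<Rightarrow> fm \<Rightarrow> bool" where
  "VC_derivable \<Gamma> \<phi> \<longleftrightarrow> closes \<Gamma> \<phi> {}"

end

theory Submission
  imports Defs "HOL-Library.Countable"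
begin


lemma idx_PF: "PF i c \<in> H \<Longrightarrow> i \<in> idx H" by (force simp: idx_def)
lemma idx_PR1: "PR i a j \<in> H \<Longrightarrow> i \<in> idx H" by (force simp: idx_def)
lemma idx_PR2: "PR i a j \<in> H \<Longrightarrow> j \<in> idx H" by (force simp: idx_def)

locale hset = fixes H :: "pf set"
  assumes cons: "PF i c \<in> H \<Longrightarrow> PF i (Neg c) \<in> H \<Longrightarrow> False"
  and nobot: "PF i Bot \<notin> H"
  and cut: "i \<in> idx H \<Longrightarrow> PF i c \<in> H \<or> PF i (Neg c) \<in> H"
  and hand: "PF i (Conj a b) \<in> H \<Longrightarrow> PF i a \<in> H \<and> PF i b \<in> H"
  and hnand: "PF i (Neg (Conj a b)) \<in> H \<Longrightarrow> PF i (Neg a) \<in> H \<or> PF i (Neg b) \<in> H"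
  and hor: "PF i (Disj a b) \<in> H \<Longrightarrow> PF i a \<in> H \<or> PF i b \<in> H"
  and hnor: "PF i (Neg (Disj a b)) \<in> H \<Longrightarrow> PF i (Neg a) \<in> H \<and> PF i (Neg b) \<in> H"
  and himp: "PF i (Imp a b) \<in> H \<Longrightarrow> PF i (Neg a) \<in> H \<or> PF i b \<in> H"
  and hnimp: "PF i (Neg (Imp a b)) \<in> H \<Longrightarrow> PF i a \<in> H \<and> PF i (Neg b) \<in> H"
  and hnneg: "PF i (Neg (Neg a)) \<in> H \<Longrightarrow> PF i a \<in> H"
  and hbox: "PF i (Box a b) \<in> H \<Longrightarrow> PR i a j \<in> H \<Longrightarrow> PF j b \<in> H"
  and hnbox: "PF i (Neg (Box a b)) \<in> H \<Longrightarrow> \<exists>j. PR i a j \<in> H \<and> PF j (Neg b) \<in> H"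
  and hdia: "PF i (Dia a b) \<in> H \<Longrightarrow> \<exists>j. PR i a j \<in> H \<and> PF j b \<in> H"
  and hndia: "PF i (Neg (Dia a b)) \<in> H \<Longrightarrow> PR i a j \<in> H \<Longrightarrow> PF j (Neg b) \<in> H"
  and hea: "PR i a j \<in> H \<Longrightarrow> \<exists>k. (PF k (Neg a) \<in> H \<and> PF k b \<in> H) \<or> (PF k a \<in> H \<and> PF k (Neg b) \<in> H) \<or> PR i b j \<in> H"
  and hR1: "PR i a j \<in> H \<Longrightarrow> PF j a \<in> H"
  and hR2: "PF j b \<in> H \<Longrightarrow> PR i a j \<in> H \<Longrightarrow> \<exists>k. PR i b k \<in> H"
  and hR3: "PF i a \<in> H \<Longrightarrow> PF j (Neg a) \<in> H \<Longrightarrow> PR i Top j \<in> H \<Longrightarrow> PF j a \<in> H"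
  and hR4: "i \<in> idx H \<Longrightarrow> PR i Top i \<in> H"
  and hR5: "PF j b \<in> H \<Longrightarrow> PR i a j \<in> H \<Longrightarrow> PR i (Conj a b) j \<in> H"
  and hR6: "PF j b \<in> H \<Longrightarrow> PR i a j \<in> H \<Longrightarrow> PR i (Conj a b) k \<in> H \<Longrightarrow> PF k b \<in> H \<and> PR i a k \<in> H"
begin

abbreviation h where "h i c \<equiv> PF i c \<in> H"
abbreviation I where "I \<equiv> idx H"
definition eqv where "eqv i j \<longleftrightarrow> (\<forall>c. h i c \<longleftrightarrow> h j c)"
definition U where "U = {i \<in> I. \<forall>j\<in>I. eqv j i \<longrightarrow> i \<le> j}"
definition ext where "ext a = {x \<in> U. h x a}"
definition relc where "relc a x y \<longleftrightarrow> (\<forall>c. h x (Box a c) \<longrightarrow> h y c)"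
definition MM :: "nat model" where
  "MM = \<lparr>dom = U, props = range ext,
     rel = (\<lambda>S. {(x,y). x \<in> U \<and> y \<in> U \<and> (\<forall>a c. S = ext a \<longrightarrow> h x (Box a c) \<longrightarrow> h y c)}),
     val = (\<lambda>p. ext (Var p))\<rparr>"

lemma UI: "x \<in> U \<Longrightarrow> x \<in> I" by (simp add: U_def)

lemma ex_rep: assumes "i \<in> I" shows "\<exists>x\<in>U. eqv x i"
proof -
  let ?x = "LEAST j. j \<in> I \<and> eqv j i"
  have e: "\<exists>j. j \<in> I \<and> eqv j i" using assms by (auto simp: eqv_def)
  have 1: "?x \<in> I \<and> eqv ?x i" using LeastI_ex[OF e] .
  have "\<forall>j\<in>I. eqv j ?x \<longrightarrow> ?x \<le> j"
    using 1 by (auto intro!: Least_le simp: eqv_def)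
  with 1 show ?thesis by (auto simp: U_def)
qed

lemma Lneg: "x \<in> I \<Longrightarrow> h x (Neg c) \<longleftrightarrow> \<not> h x c"
  using cut cons by blast

lemma Lconj: "x \<in> I \<Longrightarrow> h x (Conj a b) \<longleftrightarrow> h x a \<and> h x b"
  using cut[of x "Conj a b"] hand hnand cons by blast
lemma Ldisj: "x \<in> I \<Longrightarrow> h x (Disj a b) \<longleftrightarrow> h x a \<or> h x b"
  using cut[of x "Disj a b"] hor hnor cons by blast
lemma Limp: "x \<in> I \<Longrightarrow> h x (Imp a b) \<longleftrightarrow> (h x a \<longrightarrow> h x b)"
  using cut[of x "Imp a b"] himp hnimp cons by blast
lemma Ltop: "x \<in> I \<Longrightarrow> h x Top"
  using cut[of x Bot] nobot by (auto simp: Top_def)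

lemma rep_relc: assumes "PR x a j \<in> H" "y \<in> U" "eqv y j" shows "relc a x y"
  using assms hbox by (auto simp: relc_def eqv_def)

lemma Lbox: assumes "x \<in> I" shows "h x (Box a b) \<longleftrightarrow> (\<forall>y\<in>U. relc a x y \<longrightarrow> h y b)"
proof
  assume "h x (Box a b)" then show "\<forall>y\<in>U. relc a x y \<longrightarrow> h y b" by (auto simp: relc_def)
next
  assume R: "\<forall>y\<in>U. relc a x y \<longrightarrow> h y b"
  show "h x (Box a b)"
  proof (rule ccontr)
    assume "\<not> h x (Box a b)"
    then have "h x (Neg (Box a b))" using cut assms by blast
    then obtain j where j: "PR x a j \<in> H" "h j (Neg b)" using hnbox by blast
    obtain y where y: "y \<in> U" "eqv y j" using ex_rep idx_PR2[OF j(1)] by blast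
    have "relc a x y" using rep_relc j y by blast
    then have "h y b" using R y by blast
    then show False using y j cons by (auto simp: eqv_def)
  qed
qed

lemma Ldia: assumes "x \<in> I" shows "h x (Dia a b) \<longleftrightarrow> (\<exists>y\<in>U. relc a x y \<and> h y b)"
proof
  assume "h x (Dia a b)"
  then obtain j where j: "PR x a j \<in> H" "h j b" using hdia by blast
  obtain y where y: "y \<in> U" "eqv y j" using ex_rep idx_PR2[OF j(1)] by blast
  show "\<exists>y\<in>U. relc a x y \<and> h y b" using rep_relc[OF j(1) y] y j by (auto simp: eqv_def)
next
  assume "\<exists>y\<in>U. relc a x y \<and> h y b"
  then obtain y where y: "y \<in> U" "relc a x y" "h y b" by blast
  show "h x (Dia a b)"
  proof (rule ccontr)
    assume "\<not> h x (Dia a b)"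
    then have nd: "h x (Neg (Dia a b))" using cut assms by blast
    have "h x (Box a (Neg b))"
    proof (rule ccontr)
      assume "\<not> h x (Box a (Neg b))"
      then have "h x (Neg (Box a (Neg b)))" using cut assms by blast
      then obtain j where j: "PR x a j \<in> H" "h j (Neg (Neg b))" using hnbox by blast
      then show False using hnneg hndia[OF nd j(1)] cons by blast
    qed
    then show False using y cons by (auto simp: relc_def)
  qed
qed

lemma wd: assumes "x \<in> I" "ext a = ext a'" "h x (Box a c)" shows "h x (Box a' c)"
proof (rule ccontr)
  assume "\<not> h x (Box a' c)"
  then have "h x (Neg (Box a' c))" using cut assms by blast
  then obtain j where j: "PR x a' j \<in> H" "h j (Neg c)" using hnbox by blast
  from hea[OF j(1), of a] obtain k where
    k: "(h k (Neg a') \<and> h k a) \<or> (h k a' \<and> h k (Neg a)) \<or> PR x a j \<in> H" by blast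
  show False
  proof (cases "PR x a j \<in> H")
    case True then show False using hbox assms(3) j cons by blast
  next
    case False
    then have kk: "(h k (Neg a') \<and> h k a) \<or> (h k a' \<and> h k (Neg a))" using k by blast
    then have "k \<in> I" using idx_PF by blast
    then obtain y where y: "y \<in> U" "eqv y k" using ex_rep by blast
    have "y \<in> ext a \<longleftrightarrow> y \<in> ext a'" using assms(2) by simp
    then show False using kk y cons by (auto simp: ext_def eqv_def)
  qed
qed

lemma rel_eq: assumes x: "x \<in> U" shows "rs MM (ext a) x = {y \<in> U. relc a x y}"
proof
  show "rs MM (ext a) x \<subseteq> {y\<in>U. relc a x y}" by (auto simp: rs_def MM_def relc_def)
  show "{y \<in> U. relc a x y} \<subseteq> rs MM (ext a) x"
  proof
    fix y assume y: "y \<in> {y \<in> U. relc a x y}"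
    have "\<forall>a' c. ext a = ext a' \<longrightarrow> h x (Box a' c) \<longrightarrow> h y c"
    proof (intro allI impI)
      fix a' c assume e: "ext a = ext a'" and b: "h x (Box a' c)"
      have "h x (Box a c)" using wd[OF UI[OF x] e[symmetric] b] .
      then show "h y c" using y by (simp add: relc_def)
    qed
    then show "y \<in> rs MM (ext a) x" using x y by (simp add: rs_def MM_def)
  qed
qed

lemma truth: "x \<in> U \<Longrightarrow> sat MM c x \<longleftrightarrow> h x c"
proof (induction c arbitrary: x)
  case (Var p) then show ?case by (simp add: MM_def ext_def)
next
  case Bot then show ?case using nobot by simp
next
  case (Neg c) then show ?case using Lneg UI by simp
next
  case (Imp c1 c2) then show ?case using Limp UI by simp
next
  case (Conj c1 c2) then show ?case using Lconj UI by simp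
next
  case (Disj c1 c2) then show ?case using Ldisj UI by simp
next
  case (Box a b)
  have e: "{z \<in> dom MM. sat MM a z} = ext a" using Box.IH(1) by (auto simp: MM_def ext_def)
  have "sat MM (Box a b) x \<longleftrightarrow> (\<forall>y \<in> rs MM (ext a) x. sat MM b y)"
    using e by (simp add: rs_def)
  also have "\<dots> \<longleftrightarrow> (\<forall>y\<in>U. relc a x y \<longrightarrow> h y b)" using rel_eq[OF Box.prems] Box.IH(2) by auto
  also have "\<dots> \<longleftrightarrow> h x (Box a b)" using Lbox UI[OF Box.prems] by simp
  finally show ?case .
next
  case (Dia a b)
  have e: "{z \<in> dom MM. sat MM a z} = ext a" using Dia.IH(1) by (auto simp: MM_def ext_def)
  have "sat MM (Dia a b) x \<longleftrightarrow> (\<exists>y \<in> rs MM (ext a) x. sat MM b y)"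
    using e by (simp add: rs_def)
  also have "\<dots> \<longleftrightarrow> (\<exists>y\<in>U. relc a x y \<and> h y b)" using rel_eq[OF Dia.prems] Dia.IH(2) by auto
  also have "\<dots> \<longleftrightarrow> h x (Dia a b)" using Ldia UI[OF Dia.prems] by simp
  finally show ?case .
qed

lemma ext_props: "S \<in> props MM \<Longrightarrow> \<exists>a. S = ext a" by (auto simp: MM_def)

lemma boxself: "x \<in> I \<Longrightarrow> h x (Box a a)"
proof (rule ccontr)
  assume x: "x \<in> I" and "\<not> h x (Box a a)"
  then have "h x (Neg (Box a a))" using cut by blast
  then obtain j where j: "PR x a j \<in> H" "h j (Neg a)" using hnbox by blast
  then show False using hR1 cons by blast
qed

lemma c1: "x \<in> U \<Longrightarrow> relc a x y \<Longrightarrow> h y a"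
  using boxself UI by (auto simp: relc_def)

lemma c2: assumes x: "x \<in> U" and y: "y \<in> U" "relc a x y" "h y b" shows "\<exists>k\<in>U. relc b x k"
proof -
  have xI: "x \<in> I" using UI x by blast
  have d: "h x (Dia a b)" using Ldia[OF xI] y by blast
  have "h x (Dia b Top)"
  proof (rule ccontr)
    assume "\<not> h x (Dia b Top)"
    then have nd: "h x (Neg (Dia b Top))" using cut xI by blast
    obtain j where j: "PR x a j \<in> H" "h j b" using hdia d by blast
    obtain k where k: "PR x b k \<in> H" using hR2 j by blast
    have "h k (Neg Top)" using hndia[OF nd k] .
    then show False using hnneg nobot by (auto simp: Top_def)
  qed
  then show ?thesis using Ldia[OF xI] by blast
qed

lemma c3: assumes x: "x \<in> U" and y: "y \<in> U" and r: "relc Top x y" shows "y = x"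
proof -
  have xI: "x \<in> I" using UI x by blast
  have yI: "y \<in> I" using UI y by blast
  have bt: "h x (Box Top c)" if "h x c" for c
  proof (rule ccontr)
    assume "\<not> h x (Box Top c)"
    then have "h x (Neg (Box Top c))" using cut xI by blast
    then obtain j where j: "PR x Top j \<in> H" "h j (Neg c)" using hnbox by blast
    then show False using hR3[OF that j(2) j(1)] cons by blast
  qed
  have "eqv y x" unfolding eqv_def
  proof
    fix c
    show "h y c \<longleftrightarrow> h x c"
    proof
      assume "h x c" then show "h y c" using bt r by (auto simp: relc_def)
    next
      assume hy: "h y c"
      show "h x c"
      proof (rule ccontr)
        assume "\<not> h x c" then have "h x (Neg c)" using cut xI by blast
        then have "h y (Neg c)" using bt r by (auto simp: relc_def)
        then show False using hy cons by blast
      qed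
    qed
  qed
  moreover have "eqv x y" using calculation by (auto simp: eqv_def)
  ultimately show ?thesis using x y xI yI by (force simp: U_def)
qed

lemma c4: "x \<in> U \<Longrightarrow> relc Top x x"
  using hR4 hbox UI by (auto simp: relc_def)

lemma c5: assumes x: "x \<in> U" and y: "y \<in> U" "relc a x y" "h y b" shows "relc (Conj a b) x y"
  unfolding relc_def
proof (intro allI impI)
  fix c assume bc: "h x (Box (Conj a b) c)"
  have xI: "x \<in> I" using UI x by blast
  have yI: "y \<in> I" using UI y by blast
  show "h y c"
  proof (rule ccontr)
    assume "\<not> h y c" then have "h y (Neg c)" using cut yI by blast
    then have "h y (Conj b (Neg c))" using Lconj[OF yI] y by blast
    then have "h x (Dia a (Conj b (Neg c)))" using Ldia[OF xI] y by blast
    then obtain j where j: "PR x a j \<in> H" "h j (Conj b (Neg c))" using hdia by blast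
    then have "h j b" "h j (Neg c)" using hand by blast+
    then show False using hR5 j(1) hbox bc cons by blast
  qed
qed

lemma c6: assumes x: "x \<in> U" and y: "y \<in> U" "relc a x y" "h y b" and k: "k \<in> U" "relc (Conj a b) x k"
  shows "h k b \<and> relc a x k"
proof
  show "h k b" using c1[OF x k(2)] hand by blast
  have xI: "x \<in> I" using UI x by blast
  have kI: "k \<in> I" using UI k by blast
  show "relc a x k" unfolding relc_def
  proof (intro allI impI)
    fix c assume bc: "h x (Box a c)"
    show "h k c"
    proof (rule ccontr)
      assume "\<not> h k c" then have "h k (Neg c)" using cut kI by blast
      then have "h x (Dia (Conj a b) (Neg c))" using Ldia[OF xI] k by blast
      then obtain m where m: "PR x (Conj a b) m \<in> H" "h m (Neg c)" using hdia by blast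
      have "h x (Dia a b)" using Ldia[OF xI] y by blast
      then obtain j where j: "PR x a j \<in> H" "h j b" using hdia by blast
      from hR6[OF j(2) j(1) m(1)] have "PR x a m \<in> H" by blast
      then show False using hbox bc m cons by blast
    qed
  qed
qed

lemma ext_compl: "U - ext a = ext (Neg a)" using Lneg UI by (auto simp: ext_def)
lemma ext_int: "ext a \<inter> ext b = ext (Conj a b)" using Lconj UI by (auto simp: ext_def)
lemma ext_un: "ext a \<union> ext b = ext (Disj a b)" using Ldisj UI by (auto simp: ext_def)
lemma ext_bot: "ext Bot = {}" using nobot by (auto simp: ext_def)
lemma ext_top: "ext Top = U" using Ltop UI by (auto simp: ext_def)
lemma ext_box: "{x \<in> U. rs MM (ext a) x \<subseteq> ext b} = ext (Box a b)"
  using rel_eq Lbox UI by (auto simp: ext_def)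

lemma VC: assumes "U \<noteq> {}" shows "VC_model MM"
proof -
  have dM: "dom MM = U" by (simp add: MM_def)
  have seg: "segerberg_model MM"
    unfolding segerberg_model_def
  proof (intro conjI)
    show "dom MM \<noteq> {}" using assms dM by simp
    show "\<forall>S\<in>props MM. S \<subseteq> dom MM" by (auto simp: MM_def ext_def)
    show "\<forall>S\<in>props MM. rel MM S \<subseteq> dom MM \<times> dom MM" by (auto simp: MM_def)
    show "\<forall>p. val MM p \<in> props MM" by (auto simp: MM_def)
    show "{} \<in> props MM" using rangeI[of ext Bot] ext_bot by (simp add: MM_def)
    show "dom MM \<in> props MM" using rangeI[of ext Top] ext_top by (simp add: MM_def)
    show "\<forall>S\<in>props MM. dom MM - S \<in> props MM" using ext_compl by (auto simp: MM_def)
    show "\<forall>S\<in>props MM. \<forall>T\<in>props MM. S \<inter> T \<in> props MM \<and> S \<union> T \<in> props MM"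
      using ext_int ext_un by (auto simp: MM_def)
    show "\<forall>S\<in>props MM. \<forall>T\<in>props MM. {x \<in> dom MM. rs MM S x \<subseteq> T} \<in> props MM"
    proof (intro ballI)
      fix S T assume "S \<in> props MM" "T \<in> props MM"
      then obtain a b where ab: "S = ext a" "T = ext b" using ext_props by blast
      show "{x \<in> dom MM. rs MM S x \<subseteq> T} \<in> props MM"
        using ext_box[of a b] ab dM by (simp add: MM_def)
    qed
  qed
  have vc: "\<forall>S\<in>props MM. \<forall>T\<in>props MM. \<forall>x\<in>dom MM.
        rs MM S x \<subseteq> S \<and>
        (rs MM S x \<inter> T \<noteq> {} \<longrightarrow> rs MM T x \<noteq> {}) \<and>
        rs MM (dom MM) x \<subseteq> {x} \<and>
        x \<in> rs MM (dom MM) x \<and>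
        rs MM S x \<inter> T \<subseteq> rs MM (S \<inter> T) x \<and>
        (rs MM S x \<inter> T \<noteq> {} \<longrightarrow> rs MM (S \<inter> T) x \<subseteq> rs MM S x \<inter> T)"
  proof (intro ballI)
    fix S T x assume "S \<in> props MM" "T \<in> props MM" and x: "x \<in> dom MM"
    then obtain a b where ab: "S = ext a" "T = ext b" using ext_props by blast
    have xU: "x \<in> U" using x dM by simp
    have rS: "rs MM S x = {y \<in> U. relc a x y}" using rel_eq[OF xU] ab by simp
    have rT: "rs MM T x = {y \<in> U. relc b x y}" using rel_eq[OF xU] ab by simp
    have rD: "rs MM (dom MM) x = {y \<in> U. relc Top x y}" using rel_eq[OF xU, of Top] ext_top dM by simp
    have rST: "rs MM (S \<inter> T) x = {y \<in> U. relc (Conj a b) x y}"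
      using rel_eq[OF xU] ab ext_int by simp
    have T: "T = {y \<in> U. h y b}" using ab by (simp add: ext_def)
    show "rs MM S x \<subseteq> S \<and>
        (rs MM S x \<inter> T \<noteq> {} \<longrightarrow> rs MM T x \<noteq> {}) \<and>
        rs MM (dom MM) x \<subseteq> {x} \<and>
        x \<in> rs MM (dom MM) x \<and>
        rs MM S x \<inter> T \<subseteq> rs MM (S \<inter> T) x \<and>
        (rs MM S x \<inter> T \<noteq> {} \<longrightarrow> rs MM (S \<inter> T) x \<subseteq> rs MM S x \<inter> T)"
    proof (intro conjI impI)
      show "rs MM S x \<subseteq> S" using rS ab c1[OF xU] by (auto simp: ext_def)
      show "rs MM T x \<noteq> {}" if "rs MM S x \<inter> T \<noteq> {}" using that rS rT T c2[OF xU] by blast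
      show "rs MM (dom MM) x \<subseteq> {x}" using rD c3[OF xU] by blast
      show "x \<in> rs MM (dom MM) x" using rD c4[OF xU] xU by blast
      show "rs MM S x \<inter> T \<subseteq> rs MM (S \<inter> T) x" using rS rST T c5[OF xU] by blast
      show "rs MM (S \<inter> T) x \<subseteq> rs MM S x \<inter> T" if ne: "rs MM S x \<inter> T \<noteq> {}"
      proof
        fix k assume "k \<in> rs MM (S \<inter> T) x"
        then have k: "k \<in> U" "relc (Conj a b) x k" using rST by auto
        obtain y where y1: "y \<in> rs MM S x" "y \<in> T" using ne by blast
        have y2: "y \<in> U" "relc a x y" "h y b" using y1 unfolding rS T by auto
        have "h k b \<and> relc a x k" using c6[OF xU y2 k] .
        then show "k \<in> rs MM S x \<inter> T" unfolding rS T using k by auto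
      qed
    qed
  qed
  show ?thesis unfolding VC_model_def using seg vc by blast
qed

end

instance fm :: countable by countable_datatype
instance pf :: countable by countable_datatype

datatype task = TP "pf list list" | TNbox nat fm fm | TDia nat fm fm | TEa nat fm nat fm
  | TR2 nat fm nat fm | THyp fm | TNeg

instance task :: countable by countable_datatype

lemma finite_idx: "finite B \<Longrightarrow> finite (idx B)"
proof -
  assume "finite B"
  moreover have "\<And>p. finite (idx_of p)" by (case_tac p) auto
  ultimately show ?thesis by (simp add: idx_def)
qed

definition nw :: "pf set \<Rightarrow> nat" where "nw B = Suc (Max (insert 0 (idx B)))"

lemma fresh_nw: "finite B \<Longrightarrow> fresh (nw B) B"
proof -
  assume f: "finite B"
  have "x \<in> idx B \<Longrightarrow> x \<le> Max (insert 0 (idx B))" for x using finite_idx[OF f] by simp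
  then show ?thesis unfolding fresh_def nw_def by (meson Suc_n_not_le_n zero_less_Suc)
qed

fun alts_of :: "fm \<Rightarrow> pf set \<Rightarrow> task \<Rightarrow> pf list list" where
  "alts_of phi B (TP al) = al"
| "alts_of phi B (TNbox i a b) = [[PR i a (nw B), PF (nw B) (Neg b)]]"
| "alts_of phi B (TDia i a b) = [[PR i a (nw B), PF (nw B) b]]"
| "alts_of phi B (TEa i a j b) = [[PF (nw B) (Neg a), PF (nw B) b], [PF (nw B) a, PF (nw B) (Neg b)], [PR i b j]]"
| "alts_of phi B (TR2 i a j b) = [[PR i b (nw B)]]"
| "alts_of phi B (THyp psi) = [[PF 1 psi]]"
| "alts_of phi B TNeg = [[PF 1 (Neg phi)]]"

fun applicable :: "fm set \<Rightarrow> pf set \<Rightarrow> task \<Rightarrow> bool" where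
  "applicable G B (TP al) = vc_rule B al"
| "applicable G B (TNbox i a b) = (PF i (Neg (Box a b)) \<in> B)"
| "applicable G B (TDia i a b) = (PF i (Dia a b) \<in> B)"
| "applicable G B (TEa i a j b) = (PR i a j \<in> B)"
| "applicable G B (TR2 i a j b) = (PF j b \<in> B \<and> PR i a j \<in> B)"
| "applicable G B (THyp psi) = (psi \<in> G)"
| "applicable G B TNeg = True"

lemma app_good:
  assumes fin: "finite B" and C: "\<not> closes G phi B" and ap: "applicable G B t"
  shows "\<exists>alt\<in>set (alts_of phi B t). \<not> closes G phi (B \<union> set alt)"
proof (rule ccontr)
  assume "\<not> ?thesis"
  then have all: "\<forall>alt\<in>set (alts_of phi B t). closes G phi (B \<union> set alt)" by blast
  have fr: "fresh (nw B) B" using fresh_nw[OF fin] .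
  show False
  proof (cases t)
    case (TP al) then show False using all ap C closes.cl_rule by auto
  next
    case (TNbox i a b) then show False using all ap C closes.cl_rule vc_rule.r_nbox[OF _ fr] by fastforce
  next
    case (TDia i a b) then show False using all ap C closes.cl_rule vc_rule.r_dia[OF _ fr] by fastforce
  next
    case (TEa i a j b) then show False using all ap C closes.cl_rule vc_rule.r_ea[OF _ fr] by fastforce
  next
    case (TR2 i a j b) then show False using all ap C closes.cl_rule vc_rule.r_R2[OF _ _ fr] by fastforce
  next
    case (THyp psi) then show False using all ap C closes.cl_hyp by auto
  next
    case TNeg then show False using all ap C closes.cl_neg by auto
  qed
qed

definition step :: "fm set \<Rightarrow> fm \<Rightarrow> pf set \<Rightarrow> task \<Rightarrow> pf set" where
  "step G phi B t = (if applicable G B t \<and> (\<exists>alt\<in>set (alts_of phi B t). \<not> closes G phi (B \<union> set alt))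
     then B \<union> set (SOME alt. alt \<in> set (alts_of phi B t) \<and> \<not> closes G phi (B \<union> set alt)) else B)"

primrec bs :: "fm set \<Rightarrow> fm \<Rightarrow> nat \<Rightarrow> pf set" where
  "bs G phi 0 = {}"
| "bs G phi (Suc n) = step G phi (bs G phi n) (from_nat (fst (prod_decode n)))"

lemma step_inv: "finite B \<Longrightarrow> \<not> closes G phi B \<Longrightarrow> finite (step G phi B t) \<and> \<not> closes G phi (step G phi B t)"
  unfolding step_def
  using someI_ex[of "\<lambda>alt. alt \<in> set (alts_of phi B t) \<and> \<not> closes G phi (B \<union> set alt)"]
  by (auto simp del: alts_of.simps)

lemma bs_inv: "\<not> closes G phi {} \<Longrightarrow> finite (bs G phi n) \<and> \<not> closes G phi (bs G phi n)"
  by (induction n) (auto simp: step_inv)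

lemma bs_mono1: "bs G phi n \<subseteq> bs G phi (Suc n)" by (auto simp: step_def)
lemma bs_mono: "n \<le> m \<Longrightarrow> bs G phi n \<subseteq> bs G phi m"
  using lift_Suc_mono_le[of "bs G phi"] bs_mono1 by blast

definition HH where "HH G phi = (\<Union>n. bs G phi n)"

lemma fin_in: "finite F \<Longrightarrow> F \<subseteq> HH G phi \<Longrightarrow> \<exists>n. \<forall>n'\<ge>n. F \<subseteq> bs G phi n'"
proof (induction F rule: finite_induct)
  case empty then show ?case by simp
next
  case (insert p F)
  then obtain n where n: "\<forall>n'\<ge>n. F \<subseteq> bs G phi n'" by auto
  from insert obtain m where pm: "p \<in> bs G phi m" by (auto simp: HH_def)
  have "\<forall>n'\<ge>max n m. insert p F \<subseteq> bs G phi n'"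
  proof (intro allI impI)
    fix n' assume "max n m \<le> n'"
    then have a: "n \<le> n'" "m \<le> n'" by auto
    have "p \<in> bs G phi n'" using bs_mono[OF a(2)] pm by blast
    moreover have "F \<subseteq> bs G phi n'" using n a(1) by blast
    ultimately show "insert p F \<subseteq> bs G phi n'" by blast
  qed
  then show ?case by blast
qed

lemma idx_in: "i \<in> idx (HH G phi) \<Longrightarrow> \<exists>n. \<forall>n'\<ge>n. i \<in> idx (bs G phi n')"
proof -
  assume "i \<in> idx (HH G phi)"
  then obtain p where p: "p \<in> HH G phi" "i \<in> idx_of p" by (auto simp: idx_def)
  then obtain n where "\<forall>n'\<ge>n. {p} \<subseteq> bs G phi n'" using fin_in[of "{p}" G phi] by auto
  then have "\<forall>n'\<ge>n. i \<in> idx (bs G phi n')" using p unfolding idx_def by blast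
  then show ?thesis by blast
qed

lemma fair:
  assumes nc: "\<not> closes G phi {}" and ap: "\<forall>n'\<ge>n. applicable G (bs G phi n') t"
  shows "\<exists>B. \<exists>alt\<in>set (alts_of phi B t). set alt \<subseteq> HH G phi"
proof -
  define n' where "n' = prod_encode (to_nat t, n)"
  have ge: "n \<le> n'" unfolding n'_def by (rule le_prod_encode_2)
  have tt: "from_nat (fst (prod_decode n')) = t" by (simp add: n'_def)
  let ?B = "bs G phi n'"
  have inv: "finite ?B" "\<not> closes G phi ?B" using bs_inv[OF nc] by auto
  have a: "applicable G ?B t" using ap ge by blast
  have ex: "\<exists>alt. alt \<in> set (alts_of phi ?B t) \<and> \<not> closes G phi (?B \<union> set alt)"
    using app_good[OF inv a] by blast
  define alt where "alt = (SOME alt. alt \<in> set (alts_of phi ?B t) \<and> \<not> closes G phi (?B \<union> set alt))"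
  have al: "alt \<in> set (alts_of phi ?B t)" using someI_ex[OF ex] alt_def by blast
  have "bs G phi (Suc n') = ?B \<union> set alt"
    using tt a ex by (simp add: step_def alt_def del: alts_of.simps) blast
  then have "set alt \<subseteq> bs G phi (Suc n')" by blast
  then have "set alt \<subseteq> HH G phi" unfolding HH_def by blast
  then show ?thesis using al by blast
qed

lemma fairF:
  assumes nc: "\<not> closes G phi {}" and F: "finite F" "F \<subseteq> HH G phi"
    and ap: "\<And>B. F \<subseteq> B \<Longrightarrow> applicable G B t"
  shows "\<exists>B. \<exists>alt\<in>set (alts_of phi B t). set alt \<subseteq> HH G phi"
proof -
  obtain n where "\<forall>n'\<ge>n. F \<subseteq> bs G phi n'" using fin_in[OF F] by blast
  then have "\<forall>n'\<ge>n. applicable G (bs G phi n') t" using ap by blast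
  then show ?thesis by (rule fair[OF nc])
qed

lemma fairTP:
  assumes nc: "\<not> closes G phi {}" and F: "finite F" "F \<subseteq> HH G phi"
    and ap: "\<And>B. F \<subseteq> B \<Longrightarrow> vc_rule B al"
  shows "\<exists>alt\<in>set al. set alt \<subseteq> HH G phi"
proof -
  have "\<exists>B. \<exists>alt\<in>set (alts_of phi B (TP al)). set alt \<subseteq> HH G phi"
    using fairF[OF nc F, of "TP al"] ap by simp
  then show ?thesis by simp
qed

lemma HH_hset: assumes nc: "\<not> closes G phi {}" shows "hset (HH G phi)"
proof -
  let ?H = "HH G phi"
  note fF = fairF[OF nc]
  have bcl: False if F1: "finite F" "F \<subseteq> ?H" and F3: "branch_closed F" for F
  proof -
    obtain n where "F \<subseteq> bs G phi n" using fin_in[OF F1] by blast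
    then have "branch_closed (bs G phi n)" using F3 unfolding branch_closed_def by blast
    then show False using bs_inv[OF nc, of n] closes.cl_closed by blast
  qed
  show ?thesis
  proof
    fix i c assume "PF i c \<in> ?H" "PF i (Neg c) \<in> ?H"
    then show False using bcl[of "{PF i c, PF i (Neg c)}"] by (auto simp: branch_closed_def)
  next
    fix i show "PF i Bot \<notin> ?H" using bcl[of "{PF i Bot}"] by (auto simp: branch_closed_def)
  next
    fix i c assume "i \<in> idx ?H"
    then obtain n where n: "\<forall>n'\<ge>n. i \<in> idx (bs G phi n')" using idx_in by blast
    have "\<forall>n'\<ge>n. applicable G (bs G phi n') (TP [[PF i c], [PF i (Neg c)]])"
      using n vc_rule.r_cut by auto
    then have "\<exists>B. \<exists>alt\<in>set (alts_of phi B (TP [[PF i c], [PF i (Neg c)]])). set alt \<subseteq> ?H" by (rule fair[OF nc])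
    then show "PF i c \<in> ?H \<or> PF i (Neg c) \<in> ?H" by auto
  next
    fix i a b assume "PF i (Conj a b) \<in> ?H"
    then have P: "{PF i (Conj a b)} \<subseteq> ?H" by simp
    have "\<exists>alt\<in>set [[PF i a, PF i b]]. set alt \<subseteq> ?H" by (rule fairTP[OF nc _ P]) (auto intro: vc_rule.r_and)
    then show "PF i a \<in> ?H \<and> PF i b \<in> ?H" by simp
  next
    fix i a b assume "PF i (Neg (Conj a b)) \<in> ?H"
    then have P: "{PF i (Neg (Conj a b))} \<subseteq> ?H" by simp
    have "\<exists>alt\<in>set [[PF i (Neg a)], [PF i (Neg b)]]. set alt \<subseteq> ?H" by (rule fairTP[OF nc _ P]) (auto intro: vc_rule.r_nand)
    then show "PF i (Neg a) \<in> ?H \<or> PF i (Neg b) \<in> ?H" by simp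
  next
    fix i a b assume "PF i (Disj a b) \<in> ?H"
    then have P: "{PF i (Disj a b)} \<subseteq> ?H" by simp
    have "\<exists>alt\<in>set [[PF i a], [PF i b]]. set alt \<subseteq> ?H" by (rule fairTP[OF nc _ P]) (auto intro: vc_rule.r_or)
    then show "PF i a \<in> ?H \<or> PF i b \<in> ?H" by simp
  next
    fix i a b assume "PF i (Neg (Disj a b)) \<in> ?H"
    then have P: "{PF i (Neg (Disj a b))} \<subseteq> ?H" by simp
    have "\<exists>alt\<in>set [[PF i (Neg a), PF i (Neg b)]]. set alt \<subseteq> ?H" by (rule fairTP[OF nc _ P]) (auto intro: vc_rule.r_nor)
    then show "PF i (Neg a) \<in> ?H \<and> PF i (Neg b) \<in> ?H" by simp
  next
    fix i a b assume "PF i (Imp a b) \<in> ?H"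
    then have P: "{PF i (Imp a b)} \<subseteq> ?H" by simp
    have "\<exists>alt\<in>set [[PF i (Neg a)], [PF i b]]. set alt \<subseteq> ?H" by (rule fairTP[OF nc _ P]) (auto intro: vc_rule.r_imp)
    then show "PF i (Neg a) \<in> ?H \<or> PF i b \<in> ?H" by simp
  next
    fix i a b assume "PF i (Neg (Imp a b)) \<in> ?H"
    then have P: "{PF i (Neg (Imp a b))} \<subseteq> ?H" by simp
    have "\<exists>alt\<in>set [[PF i a, PF i (Neg b)]]. set alt \<subseteq> ?H" by (rule fairTP[OF nc _ P]) (auto intro: vc_rule.r_nimp)
    then show "PF i a \<in> ?H \<and> PF i (Neg b) \<in> ?H" by simp
  next
    fix i a assume "PF i (Neg (Neg a)) \<in> ?H"
    then have P: "{PF i (Neg (Neg a))} \<subseteq> ?H" by simp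
    have "\<exists>alt\<in>set [[PF i a]]. set alt \<subseteq> ?H" by (rule fairTP[OF nc _ P]) (auto intro: vc_rule.r_nneg)
    then show "PF i a \<in> ?H" by simp
  next
    fix i a b j assume "PF i (Box a b) \<in> ?H" "PR i a j \<in> ?H"
    then have P: "{PF i (Box a b), PR i a j} \<subseteq> ?H" by simp
    have "\<exists>alt\<in>set [[PF j b]]. set alt \<subseteq> ?H" by (rule fairTP[OF nc _ P]) (auto intro: vc_rule.r_box)
    then show "PF j b \<in> ?H" by simp
  next
    fix i a b assume "PF i (Neg (Box a b)) \<in> ?H"
    then have P: "{PF i (Neg (Box a b))} \<subseteq> ?H" by simp
    have "\<exists>B. \<exists>alt\<in>set (alts_of phi B (TNbox i a b)). set alt \<subseteq> ?H" by (rule fF[OF _ P]) auto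
    then show "\<exists>j. PR i a j \<in> ?H \<and> PF j (Neg b) \<in> ?H" by auto
  next
    fix i a b assume "PF i (Dia a b) \<in> ?H"
    then have P: "{PF i (Dia a b)} \<subseteq> ?H" by simp
    have "\<exists>B. \<exists>alt\<in>set (alts_of phi B (TDia i a b)). set alt \<subseteq> ?H" by (rule fF[OF _ P]) auto
    then show "\<exists>j. PR i a j \<in> ?H \<and> PF j b \<in> ?H" by auto
  next
    fix i a b j assume "PF i (Neg (Dia a b)) \<in> ?H" "PR i a j \<in> ?H"
    then have P: "{PF i (Neg (Dia a b)), PR i a j} \<subseteq> ?H" by simp
    have "\<exists>alt\<in>set [[PF j (Neg b)]]. set alt \<subseteq> ?H" by (rule fairTP[OF nc _ P]) (auto intro: vc_rule.r_ndia)
    then show "PF j (Neg b) \<in> ?H" by simp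
  next
    fix i a j b assume "PR i a j \<in> ?H"
    then have P: "{PR i a j} \<subseteq> ?H" by simp
    have "\<exists>B. \<exists>alt\<in>set (alts_of phi B (TEa i a j b)). set alt \<subseteq> ?H" by (rule fF[OF _ P]) auto
    then show "\<exists>k. (PF k (Neg a) \<in> ?H \<and> PF k b \<in> ?H) \<or> (PF k a \<in> ?H \<and> PF k (Neg b) \<in> ?H) \<or> PR i b j \<in> ?H" by auto
  next
    fix i a j assume "PR i a j \<in> ?H"
    then have P: "{PR i a j} \<subseteq> ?H" by simp
    have "\<exists>alt\<in>set [[PF j a]]. set alt \<subseteq> ?H" by (rule fairTP[OF nc _ P]) (auto intro: vc_rule.r_R1)
    then show "PF j a \<in> ?H" by simp
  next
    fix j b i a assume "PF j b \<in> ?H" "PR i a j \<in> ?H"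
    then have P: "{PF j b, PR i a j} \<subseteq> ?H" by simp
    have "\<exists>B. \<exists>alt\<in>set (alts_of phi B (TR2 i a j b)). set alt \<subseteq> ?H" by (rule fF[OF _ P]) auto
    then show "\<exists>k. PR i b k \<in> ?H" by auto
  next
    fix i a j assume "PF i a \<in> ?H" "PF j (Neg a) \<in> ?H" "PR i Top j \<in> ?H"
    then have P: "{PF i a, PF j (Neg a), PR i Top j} \<subseteq> ?H" by simp
    have "\<exists>alt\<in>set [[PF j a]]. set alt \<subseteq> ?H" by (rule fairTP[OF nc _ P]) (auto intro: vc_rule.r_R3)
    then show "PF j a \<in> ?H" by simp
  next
    fix i assume "i \<in> idx ?H"
    then obtain n where n: "\<forall>n'\<ge>n. i \<in> idx (bs G phi n')" using idx_in by blast
    have "\<forall>n'\<ge>n. applicable G (bs G phi n') (TP [[PR i Top i]])"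
      using n vc_rule.r_R4 by auto
    then have "\<exists>B. \<exists>alt\<in>set (alts_of phi B (TP [[PR i Top i]])). set alt \<subseteq> ?H" by (rule fair[OF nc])
    then show "PR i Top i \<in> ?H" by auto
  next
    fix j b i a assume "PF j b \<in> ?H" "PR i a j \<in> ?H"
    then have P: "{PF j b, PR i a j} \<subseteq> ?H" by simp
    have "\<exists>alt\<in>set [[PR i (Conj a b) j]]. set alt \<subseteq> ?H" by (rule fairTP[OF nc _ P]) (auto intro: vc_rule.r_R5)
    then show "PR i (Conj a b) j \<in> ?H" by simp
  next
    fix j b i a k assume "PF j b \<in> ?H" "PR i a j \<in> ?H" "PR i (Conj a b) k \<in> ?H"
    then have P: "{PF j b, PR i a j, PR i (Conj a b) k} \<subseteq> ?H" by simp
    have "\<exists>alt\<in>set [[PF k b, PR i a k]]. set alt \<subseteq> ?H" by (rule fairTP[OF nc _ P]) (auto intro: vc_rule.r_R6)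
    then show "PF k b \<in> ?H \<and> PR i a k \<in> ?H" by simp
  qed
qed

lemma HH_hyp: "\<not> closes G phi {} \<Longrightarrow> psi \<in> G \<Longrightarrow> PF 1 psi \<in> HH G phi"
proof -
  assume nc: "\<not> closes G phi {}" and p: "psi \<in> G"
  have "\<exists>B. \<exists>alt\<in>set (alts_of phi B (THyp psi)). set alt \<subseteq> HH G phi" by (rule fairF[OF nc, of "{}"]) (auto simp: p)
  then show ?thesis by auto
qed
lemma HH_neg: "\<not> closes G phi {} \<Longrightarrow> PF 1 (Neg phi) \<in> HH G phi"
proof -
  assume nc: "\<not> closes G phi {}"
  have "\<exists>B. \<exists>alt\<in>set (alts_of phi B TNeg). set alt \<subseteq> HH G phi" by (rule fairF[OF nc, of "{}"]) auto
  then show ?thesis by auto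
qed

theorem mainTheorem10:
  fixes \<Gamma> :: "fm set" and \<phi> :: fm
  assumes "VC_conseq \<Gamma> \<phi>"
  shows "VC_derivable \<Gamma> \<phi>"
proof (rule ccontr)
  assume "\<not> VC_derivable \<Gamma> \<phi>"
  then have nc: "\<not> closes \<Gamma> \<phi> {}" by (simp add: VC_derivable_def)
  interpret hset "HH \<Gamma> \<phi>" using HH_hset[OF nc] .
  have n1: "PF 1 (Neg \<phi>) \<in> HH \<Gamma> \<phi>" using HH_neg[OF nc] .
  then have "1 \<in> I" using idx_PF by blast
  then obtain x where x: "x \<in> U" "eqv x 1" using ex_rep by blast
  have vc: "VC_model MM" using VC x by blast
  have xd: "x \<in> dom MM" using x by (simp add: MM_def)
  have "\<forall>\<psi>\<in>\<Gamma>. sat MM \<psi> x" using truth[OF x(1)] x(2) HH_hyp[OF nc] by (auto simp: eqv_def)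
  moreover have "\<not> sat MM \<phi> x" using truth[OF x(1)] x(2) n1 cons by (auto simp: eqv_def)
  ultimately show False using assms vc xd unfolding VC_conseq_def by blast
qed

end
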